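(* If $K$ is a quadratic extension of $\mathbb{Q}$ with ring of integers $\mathfrak{o}_K$, then the group $\mathcal{U}_1(\mathfrak{o}_K[C_2])$ is hyperbolic.
   Context: $C_2$ is the cyclic group of order $2$; $\mathcal{U}_1(\mathfrak{o}_K[C_2])$ is the group of units of augmentation $1$ in the group ring. Hyperbolic means Gromov-hyperbolic (Cayley graph with word metric for a finite generating set is a hyperbolic metric space). *)

theory Defs
  imports Complex_Main "HOL-Computational_Algebra.Polynomial" "HOL-Algebra.Ring" "HOL-Algebra.Generated_Groups"
begin

definition subfield_of_complex :: "complex set \<Rightarrow> bool" where
  "subfield_of_complex K \<longleftrightarrow> 0 \<in> K \<and> 1 \<in> K \<and>
     (\<forall>x\<in>K. \<forall>y\<in>K. x + y \<in> K \<and> x * y \<in> K) \<and>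
     (\<forall>x\<in>K. - x \<in> K \<and> inverse x \<in> K)"

definition quadratic_field :: "complex set \<Rightarrow> bool" where
  "quadratic_field K \<longleftrightarrow> subfield_of_complex K \<and>
     (\<exists>\<alpha>\<in>K. \<alpha> \<notin> \<rat> \<and> K = {of_rat a + of_rat b * \<alpha> | a b. True})"

definition ring_of_integers :: "complex set \<Rightarrow> complex set" where
  "ring_of_integers K = {x \<in> K. algebraic_int x}"

text \<open>An element a + b g (g the generator of C_2) is represented by the pair (a, b).\<close>
definition group_ring_C2 :: "complex set \<Rightarrow> (complex \<times> complex) ring" where
  "group_ring_C2 Ok = \<lparr> carrier = Ok \<times> Ok,
      mult = (\<lambda>(a, b) (c, d). (a * c + b * d, a * d + b * c)),
      one = (1, 0),
      zero = (0, 0),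
      add = (\<lambda>(a, b) (c, d). (a + c, b + d)) \<rparr>"

definition augmentation :: "complex \<times> complex \<Rightarrow> complex" where
  "augmentation u = fst u + snd u"

definition U1 :: "complex set \<Rightarrow> (complex \<times> complex) monoid" where
  "U1 Ok = (units_of (group_ring_C2 Ok))
            \<lparr> carrier := {u \<in> Units (group_ring_C2 Ok). augmentation u = 1} \<rparr>"

definition word_len :: "('a, 'b) monoid_scheme \<Rightarrow> 'a set \<Rightarrow> 'a \<Rightarrow> nat" where
  "word_len G S x = (LEAST n. \<exists>ws. length ws = n \<and> set ws \<subseteq> S \<union> m_inv G ` S \<and>
                         foldr (\<otimes>\<^bsub>G\<^esub>) ws \<one>\<^bsub>G\<^esub> = x)"

definition word_dist :: "('a, 'b) monoid_scheme \<Rightarrow> 'a set \<Rightarrow> 'a \<Rightarrow> 'a \<Rightarrow> real" where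
  "word_dist G S x y = real (word_len G S (inv\<^bsub>G\<^esub> x \<otimes>\<^bsub>G\<^esub> y))"

definition gromov_product :: "('a \<Rightarrow> 'a \<Rightarrow> real) \<Rightarrow> 'a \<Rightarrow> 'a \<Rightarrow> 'a \<Rightarrow> real" where
  "gromov_product d w x y = (d w x + d w y - d x y) / 2"

definition delta_hyperbolic :: "'a set \<Rightarrow> ('a \<Rightarrow> 'a \<Rightarrow> real) \<Rightarrow> real \<Rightarrow> bool" where
  "delta_hyperbolic X d \<delta> \<longleftrightarrow> (\<forall>x\<in>X. \<forall>y\<in>X. \<forall>z\<in>X. \<forall>w\<in>X.
      gromov_product d w x z \<ge> min (gromov_product d w x y) (gromov_product d w y z) - \<delta>)"

definition hyperbolic_group :: "('a, 'b) monoid_scheme \<Rightarrow> bool" where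
  "hyperbolic_group G \<longleftrightarrow> group G \<and>
     (\<exists>S. finite S \<and> S \<subseteq> carrier G \<and> generate G S = carrier G \<and>
          (\<exists>\<delta>\<ge>0. delta_hyperbolic (carrier G) (word_dist G S) \<delta>))"

end

theory Submission
  imports Defs
begin

lemma line_four_point:
  fixes a b c d :: real
  shows "(\<bar>a-b\<bar> + \<bar>a-d\<bar> - \<bar>b-d\<bar>)/2 \<ge> min ((\<bar>a-b\<bar> + \<bar>a-c\<bar> - \<bar>b-c\<bar>)/2) ((\<bar>a-c\<bar> + \<bar>a-d\<bar> - \<bar>c-d\<bar>)/2)"
  by (simp add: min_def abs_if split: if_splits) linarith?

lemma aux_lo: fixes a b e A B E c::real assumes "-(a - A) \<le> c" "-(b-B) \<le> c" "e - E \<le> c"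
  shows "(A + B - E)/2 - 3*c/2 \<le> (a+b-e)/2"
proof -
  have "A + B - E - 3*c \<le> a+b-e" using assms by linarith
  then show ?thesis by (simp add: field_simps)
qed
lemma aux_hi: fixes a b e A B E c::real assumes "a - A \<le> c" "b-B \<le> c" "-(e - E) \<le> c"
  shows "(a+b-e)/2 \<le> (A + B - E)/2 + 3*c/2"
proof -
  have "a+b-e \<le> A + B - E + 3*c" using assms by linarith
  then show ?thesis by (simp add: field_simps)
qed

lemma quasi_line_hyperbolic:
  fixes d :: "'a \<Rightarrow> 'a \<Rightarrow> real" and h :: "'a \<Rightarrow> real"
  assumes "\<And>x y. x \<in> X \<Longrightarrow> y \<in> X \<Longrightarrow> \<bar>d x y - \<bar>h x - h y\<bar>\<bar> \<le> c"
  shows "delta_hyperbolic X d (3*c)"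
  unfolding delta_hyperbolic_def gromov_product_def
proof (intro ballI)
  fix x y z w assume xs: "x \<in> X" "y \<in> X" "z \<in> X" "w \<in> X"
  have L: "(\<bar>h w-h x\<bar> + \<bar>h w-h z\<bar> - \<bar>h x-h z\<bar>)/2 \<ge> min ((\<bar>h w-h x\<bar> + \<bar>h w-h y\<bar> - \<bar>h x-h y\<bar>)/2) ((\<bar>h w-h y\<bar> + \<bar>h w-h z\<bar> - \<bar>h y-h z\<bar>)/2)"
    by (rule line_four_point)
  have a: "\<bar>d w x - \<bar>h w - h x\<bar>\<bar> \<le> c" "\<bar>d w z - \<bar>h w - h z\<bar>\<bar> \<le> c" "\<bar>d x z - \<bar>h x - h z\<bar>\<bar> \<le> c"
     "\<bar>d w y - \<bar>h w - h y\<bar>\<bar> \<le> c" "\<bar>d x y - \<bar>h x - h y\<bar>\<bar> \<le> c" "\<bar>d y z - \<bar>h y - h z\<bar>\<bar> \<le> c"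
    using assms xs by auto
  show "min ((d w x + d w y - d x y) / 2) ((d w y + d w z - d y z) / 2) - 3 * c
           \<le> (d w x + d w z - d x z) / 2"
  proof -
    let ?g = "\<lambda>p q r. (\<bar>h p - h q\<bar> + \<bar>h p - h r\<bar> - \<bar>h q - h r\<bar>)/2"
    have 1: "(d w x + d w z - d x z) / 2 \<ge> ?g w x z - 3*c/2" using a unfolding abs_le_iff by (intro aux_lo) auto
    have 2: "(d w x + d w y - d x y) / 2 \<le> ?g w x y + 3*c/2" using a unfolding abs_le_iff by (intro aux_hi) auto
    have 3: "(d w y + d w z - d y z) / 2 \<le> ?g w y z + 3*c/2" using a unfolding abs_le_iff by (intro aux_hi) auto
    have "min ((d w x + d w y - d x y) / 2) ((d w y + d w z - d y z) / 2) \<le> min (?g w x y) (?g w y z) + 3*c/2"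
      using 2 3 by (simp add: min_def)
    then show ?thesis using 1 L by linarith
  qed
qed

context group begin

lemma f_one:
  assumes hom: "\<And>x y. x \<in> carrier G \<Longrightarrow> y \<in> carrier G \<Longrightarrow> f (x \<otimes> y) = f x + (f y::int)"
  shows "f \<one> = 0"
  using hom[of \<one> \<one>] by simp

lemma f_inv:
  assumes hom: "\<And>x y. x \<in> carrier G \<Longrightarrow> y \<in> carrier G \<Longrightarrow> f (x \<otimes> y) = f x + (f y::int)"
    and "x \<in> carrier G"
  shows "f (inv x) = - f x"
  using hom[of "inv x" x] f_one[OF hom] assms(2) by simp

lemma word_facts:
  assumes hom: "\<And>x y. x \<in> carrier G \<Longrightarrow> y \<in> carrier G \<Longrightarrow> f (x \<otimes> y) = f x + (f y::int)"
    and S: "S \<subseteq> carrier G" "\<And>s. s \<in> S \<Longrightarrow> \<bar>f s\<bar> \<le> 1"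
  shows "set ws \<subseteq> S \<union> m_inv G ` S \<Longrightarrow> foldr (\<otimes>) ws \<one> \<in> carrier G \<and>
          \<bar>f (foldr (\<otimes>) ws \<one>)\<bar> \<le> int (length ws) \<and> foldr (\<otimes>) ws \<one> \<in> generate G S"
proof (induction ws)
  case Nil
  then show ?case using f_one[OF hom] by (simp add: generate.one)
next
  case (Cons a ws)
  then have IH: "foldr (\<otimes>) ws \<one> \<in> carrier G"
          "\<bar>f (foldr (\<otimes>) ws \<one>)\<bar> \<le> int (length ws)" "foldr (\<otimes>) ws \<one> \<in> generate G S"
    by auto
  from Cons.prems have a: "a \<in> S \<union> m_inv G ` S" by auto
  then have ac: "a \<in> carrier G" using S by auto
  have fa: "\<bar>f a\<bar> \<le> 1" using a S f_inv[OF hom] by auto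
  have ga: "a \<in> generate G S" using a by (auto intro: generate.incl generate.inv)
  show ?case using IH ac fa ga hom[OF ac IH(1)] by (auto intro: generate.eng)
qed

lemma hyperbolic_from_hom:
  assumes hom: "\<And>x y. x \<in> carrier G \<Longrightarrow> y \<in> carrier G \<Longrightarrow> f (x \<otimes> y) = f x + (f y::int)"
    and S: "finite S" "S \<subseteq> carrier G" "\<And>s. s \<in> S \<Longrightarrow> \<bar>f s\<bar> \<le> 1"
    and W: "\<And>x. x \<in> carrier G \<Longrightarrow> \<exists>ws. int (length ws) \<le> \<bar>f x\<bar> + c \<and>
                 set ws \<subseteq> S \<union> m_inv G ` S \<and> foldr (\<otimes>) ws \<one> = x"
    and c: "c \<ge> 0"
  shows "hyperbolic_group G"
proof -
  have wf: "foldr (\<otimes>) ws \<one> \<in> carrier G \<and>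
          \<bar>f (foldr (\<otimes>) ws \<one>)\<bar> \<le> int (length ws) \<and> foldr (\<otimes>) ws \<one> \<in> generate G S"
    if "set ws \<subseteq> S \<union> m_inv G ` S" for ws
    using word_facts[of f S ws] hom S that by blast
  have gen: "generate G S = carrier G"
  proof
    show "generate G S \<subseteq> carrier G" using generate_incl[OF S(2)] .
    show "carrier G \<subseteq> generate G S"
    proof
      fix x assume "x \<in> carrier G"
      then obtain ws where "set ws \<subseteq> S \<union> m_inv G ` S" "foldr (\<otimes>) ws \<one> = x" using W by blast
      then show "x \<in> generate G S" using wf by blast
    qed
  qed
  have wl: "\<bar>f x\<bar> \<le> int (word_len G S x) \<and> int (word_len G S x) \<le> \<bar>f x\<bar> + c" if x: "x \<in> carrier G" for x
  proof -
    obtain ws where ws: "int (length ws) \<le> \<bar>f x\<bar> + c" "set ws \<subseteq> S \<union> m_inv G ` S" "foldr (\<otimes>) ws \<one> = x"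
      using W[OF x] by blast
    define P where "P = (\<lambda>n. \<exists>ws. length ws = n \<and> set ws \<subseteq> S \<union> m_inv G ` S \<and>
                         foldr (\<otimes>) ws \<one> = x)"
    have wd: "word_len G S x = (LEAST n. P n)" unfolding word_len_def P_def by simp
    have Pn: "P (length ws)" using ws unfolding P_def by blast
    have le: "(LEAST n. P n) \<le> length ws" using Least_le[of P, OF Pn] .
    have "P (LEAST n. P n)" using LeastI[of P, OF Pn] .
    then obtain vs where vs: "length vs = (LEAST n. P n)" "set vs \<subseteq> S \<union> m_inv G ` S" "foldr (\<otimes>) vs \<one> = x"
      unfolding P_def by blast
    have "\<bar>f x\<bar> \<le> int (length vs)" using wf[OF vs(2)] vs(3) by auto
    then show ?thesis using le ws(1) vs(1) wd by linarith
  qed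
  have "\<bar>word_dist G S x y - \<bar>real_of_int (f x) - real_of_int (f y)\<bar>\<bar> \<le> c"
    if "x \<in> carrier G" "y \<in> carrier G" for x y
  proof -
    have ic: "inv x \<otimes> y \<in> carrier G" using that by auto
    have "f (inv x \<otimes> y) = f y - f x" using hom[of "inv x" y] f_inv[OF hom, of x] that by auto
    then have "\<bar>f y - f x\<bar> \<le> int (word_len G S (inv x \<otimes> y)) \<and> int (word_len G S (inv x \<otimes> y)) \<le> \<bar>f y - f x\<bar> + c"
      using wl[OF ic] by simp
    then show ?thesis unfolding word_dist_def
      by (simp add: abs_le_iff abs_minus_commute) linarith
  qed
  then have "delta_hyperbolic (carrier G) (word_dist G S) (3 * real_of_int c)"
    by (intro quasi_line_hyperbolic[where h="\<lambda>x. real_of_int (f x)"]) auto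
  then show ?thesis unfolding hyperbolic_group_def using is_group S gen c
    by (intro conjI exI[of _ S]) (auto intro!: exI[of _ "3 * real_of_int c"])
qed

end


context group begin

lemma L_one: assumes hom: "\<And>x y. x \<in> carrier G \<Longrightarrow> y \<in> carrier G \<Longrightarrow> L (x \<otimes> y) = L x + (L y::real)"
  shows "L \<one> = 0" using hom[of \<one> \<one>] by simp

lemma L_inv: assumes hom: "\<And>x y. x \<in> carrier G \<Longrightarrow> y \<in> carrier G \<Longrightarrow> L (x \<otimes> y) = L x + (L y::real)"
  and "x \<in> carrier G" shows "L (inv x) = - L x"
  using hom[of "inv x" x] L_one[OF hom] assms(2) by simp

lemma L_natpow: assumes hom: "\<And>x y. x \<in> carrier G \<Longrightarrow> y \<in> carrier G \<Longrightarrow> L (x \<otimes> y) = L x + (L y::real)"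
  and "x \<in> carrier G" shows "L (x [^] (n::nat)) = real n * L x"
proof (induction n)
  case 0 then show ?case using L_one[OF hom] by simp
next
  case (Suc n)
  have "L (x [^] Suc n) = L (x [^] n) + L x" using hom[of "x [^] n" x] assms(2) by simp
  then show ?case using Suc by (simp add: distrib_right)
qed

lemma L_intpow: assumes hom: "\<And>x y. x \<in> carrier G \<Longrightarrow> y \<in> carrier G \<Longrightarrow> L (x \<otimes> y) = L x + (L y::real)"
  and "x \<in> carrier G" shows "L (x [^] (k::int)) = real_of_int k * L x"
proof (cases "k < 0")
  case True
  then have "x [^] k = inv (x [^] nat (-k))" using int_pow_def2[of G x k] by (simp only: True if_True)
  then have "L (x [^] k) = - L (x [^] nat (-k))" using L_inv[OF hom, of "x [^] nat (-k)"] assms(2) by simp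
  then show ?thesis using L_natpow[OF hom assms(2), of "nat (-k)"] True by simp
next
  case False
  then have "x [^] k = x [^] nat k" using int_pow_def2[of G x k] by (simp only: False if_False)
  then show ?thesis using L_natpow[OF hom assms(2), of "nat k"] False by simp
qed

lemma foldr_replicate: "e \<in> carrier G \<Longrightarrow> foldr (\<otimes>) (replicate n e) \<one> = e [^] n"
  by (induction n) (simp_all add: nat_pow_Suc2[symmetric] del: nat_pow_Suc)

lemma hyperbolic_from_real_hom:
  assumes hom: "\<And>x y. x \<in> carrier G \<Longrightarrow> y \<in> carrier G \<Longrightarrow> L (x \<otimes> y) = L x + (L y::real)"
    and fin: "\<And>C. finite {g \<in> carrier G. \<bar>L g\<bar> \<le> C}"
  shows "hyperbolic_group G"
proof (cases "\<forall>g\<in>carrier G. L g = 0")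
  case True
  then have "carrier G = {g \<in> carrier G. \<bar>L g\<bar> \<le> 0}" by auto
  then have finc: "finite (carrier G)" using fin[of 0] by metis
  show ?thesis
  proof (rule hyperbolic_from_hom[where f="\<lambda>_. 0" and S="carrier G" and c=1])
    fix x assume "x \<in> carrier G"
    then show "\<exists>ws. int (length ws) \<le> \<bar>0\<bar> + 1 \<and> set ws \<subseteq> carrier G \<union> m_inv G ` carrier G \<and>
             foldr (\<otimes>) ws \<one> = x"
      by (intro exI[of _ "[x]"]) auto
  qed (use finc in auto)
next
  case False
  then obtain g1 where g1: "g1 \<in> carrier G" "L g1 \<noteq> 0" by blast
  obtain g0 where g0: "g0 \<in> carrier G" "L g0 > 0"
  proof (cases "L g1 > 0")
    case True then show ?thesis using that g1 by blast
  next
    case False then show ?thesis using that[of "inv g1"] g1 L_inv[OF hom g1(1)] by auto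
  qed
  define P where "P = {g \<in> carrier G. 0 < L g \<and> L g \<le> L g0}"
  have finP: "finite P" unfolding P_def by (rule finite_subset[OF _ fin[of "L g0"]]) auto
  have "g0 \<in> P" using g0 unfolding P_def by auto
  then have ne: "L ` P \<noteq> {}" by auto
  have "Min (L ` P) \<in> L ` P" using Min_in[OF finite_imageI[OF finP] ne] .
  then obtain \<eta> where eta: "\<eta> \<in> P" "L \<eta> = Min (L ` P)" by auto
  have etamin: "\<And>g. g \<in> P \<Longrightarrow> L \<eta> \<le> L g" using eta(2) finP by auto
  define m where "m = L \<eta>"
  have ec: "\<eta> \<in> carrier G" and m0: "m > 0" and mg0: "m \<le> L g0" using eta(1) unfolding P_def m_def by auto
  define f where "f = (\<lambda>x. \<lfloor>L x / m\<rfloor>)"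
  have key: "L x = real_of_int (f x) * m" if x: "x \<in> carrier G" for x
  proof -
    define k where "k = f x"
    define y where "y = x \<otimes> inv (\<eta> [^] k)"
    have yc: "y \<in> carrier G" unfolding y_def using x ec by auto
    have Ly: "L y = L x - real_of_int k * m"
      unfolding y_def using hom[of x "inv (\<eta> [^] k)"] L_inv[OF hom, of "\<eta> [^] k"] L_intpow[OF hom ec, of k] x ec
      by (simp add: m_def)
    have k1: "real_of_int k \<le> L x / m" and k2: "L x / m < real_of_int k + 1"
      unfolding k_def f_def by linarith+
    have "real_of_int k * m \<le> L x" using k1 m0 by (simp add: field_simps)
    moreover have "L x < (real_of_int k + 1) * m" using k2 m0 by (simp add: field_simps)
    ultimately have y1: "0 \<le> L y" "L y < m" using Ly by (auto simp: algebra_simps)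
    have "L y = 0"
    proof (rule ccontr)
      assume "L y \<noteq> 0"
      then have "y \<in> P" using y1 yc mg0 unfolding P_def by auto
      then have "m \<le> L y" using etamin m_def by auto
      then show False using y1 by simp
    qed
    then show ?thesis using Ly k_def by simp
  qed
  have fhom: "f (x \<otimes> y) = f x + f y" if "x \<in> carrier G" "y \<in> carrier G" for x y
  proof -
    have "real_of_int (f (x \<otimes> y)) * m = real_of_int (f x + f y) * m"
      using key[of "x \<otimes> y"] key[of x] key[of y] hom[OF that] that by (simp add: algebra_simps)
    then have "real_of_int (f (x \<otimes> y)) = real_of_int (f x + f y)" using m0 by simp
    then show ?thesis by linarith
  qed
  define T where "T = {g \<in> carrier G. L g = 0}"
  have finT: "finite T" unfolding T_def by (rule finite_subset[OF _ fin[of 0]]) auto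
  have fT: "f t = 0" if "t \<in> T" for t using that unfolding T_def f_def by simp
  have feta: "f \<eta> = 1" unfolding f_def m_def using m0 m_def by simp
  show ?thesis
  proof (rule hyperbolic_from_hom[where f=f and S="insert \<eta> T" and c=1])
    show "\<And>x y. x \<in> carrier G \<Longrightarrow> y \<in> carrier G \<Longrightarrow> f (x \<otimes> y) = f x + f y" by (rule fhom)
    show "finite (insert \<eta> T)" using finT by simp
    show "insert \<eta> T \<subseteq> carrier G" using ec unfolding T_def by auto
    show "\<And>s. s \<in> insert \<eta> T \<Longrightarrow> \<bar>f s\<bar> \<le> 1" using fT feta by auto
    show "(0::int) \<le> 1" by simp
  next
    fix x assume x: "x \<in> carrier G"
    define k where "k = f x"
    define t where "t = x \<otimes> inv (\<eta> [^] k)"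
    have tc: "t \<in> carrier G" unfolding t_def using x ec by auto
    have "L t = L x - real_of_int k * m"
      unfolding t_def using hom[of x "inv (\<eta> [^] k)"] L_inv[OF hom, of "\<eta> [^] k"] L_intpow[OF hom ec, of k] x ec
      by (simp add: m_def)
    then have tT: "t \<in> T" using key[OF x] k_def tc unfolding T_def by simp
    have xt: "x = t \<otimes> \<eta> [^] k" unfolding t_def using x ec m_assoc[of x "inv (\<eta> [^] k)" "\<eta> [^] k"] by simp
    define e where "e = (if k \<ge> 0 then \<eta> else inv \<eta>)"
    have ecar: "e \<in> carrier G" unfolding e_def using ec by auto
    have epow: "e [^] (nat \<bar>k\<bar>) = \<eta> [^] k"
    proof (cases "k \<ge> 0")
      case True
      then have ke: "k = int (nat \<bar>k\<bar>)" by simp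
      have "e = \<eta>" unfolding e_def using True by simp
      then show ?thesis using int_pow_int[of G \<eta> "nat \<bar>k\<bar>"] ke by metis
    next
      case False
      then have ke: "k = - int (nat \<bar>k\<bar>)" by simp
      have "e = inv \<eta>" unfolding e_def using False by simp
      then show ?thesis using int_pow_neg_int[OF ec, of "nat \<bar>k\<bar>"] nat_pow_inv[OF ec, of "nat \<bar>k\<bar>"] ke by metis
    qed
    define ws where "ws = t # replicate (nat \<bar>k\<bar>) e"
    show "\<exists>ws. int (length ws) \<le> \<bar>f x\<bar> + 1 \<and> set ws \<subseteq> insert \<eta> T \<union> m_inv G ` insert \<eta> T \<and>
             foldr (\<otimes>) ws \<one> = x"
    proof (intro exI[of _ ws] conjI)
      show "int (length ws) \<le> \<bar>f x\<bar> + 1" unfolding ws_def k_def by simp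
      show "set ws \<subseteq> insert \<eta> T \<union> m_inv G ` insert \<eta> T" unfolding ws_def e_def using tT by auto
      show "foldr (\<otimes>) ws \<one> = x" unfolding ws_def using foldr_replicate[OF ecar] epow xt by simp
    qed
  qed
qed

end


lemma mp_add: "map_poly (of_int::int\<Rightarrow>'a::ring_1) (p + q) = map_poly of_int p + map_poly of_int q"
  by (intro poly_eqI) (simp add: coeff_map_poly)

lemma mp_smult: "map_poly (of_int::int\<Rightarrow>'a::comm_ring_1) (smult c p) = smult (of_int c) (map_poly of_int p)"
  by (rule map_poly_smult) simp_all

lemma mp_mult: "map_poly (of_int::int\<Rightarrow>'a::comm_ring_1) (p * q) = map_poly of_int p * map_poly of_int q"
proof (induction p)
  case 0 then show ?case by simp
next
  case (pCons a p)
  then show ?case by (simp add: map_poly_pCons mp_add mp_smult algebra_simps)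
qed

lemma deg2_poly:
  fixes g :: "int poly" and x :: complex
  assumes "degree g \<le> 2"
  shows "poly (map_poly of_int g) x = of_int (coeff g 0) + of_int (coeff g 1) * x + of_int (coeff g 2) * x^2"
proof -
  have "g = [:coeff g 0, coeff g 1, coeff g 2:]"
  proof (rule poly_eqI)
    fix n show "coeff g n = coeff [:coeff g 0, coeff g 1, coeff g 2:] n"
      using assms by (cases n; cases "n - 1"; cases "n - 2") (auto simp: coeff_pCons coeff_eq_0 numeral_2_eq_2)
  qed
  then have "poly (map_poly of_int g) x = poly (map_poly of_int [:coeff g 0, coeff g 1, coeff g 2:]) x" by simp
  also have "\<dots> = of_int (coeff g 0) + x * (of_int (coeff g 1) + x * of_int (coeff g 2))"
    by (simp add: map_poly_pCons)
  finally show ?thesis by (simp add: algebra_simps power2_eq_square)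
qed

lemma lin_indep:
  fixes x a b :: complex
  assumes "x \<notin> \<rat>" "a \<in> \<rat>" "b \<in> \<rat>" "a + b * x = 0"
  shows "a = 0 \<and> b = 0"
proof (cases "b = 0")
  case True then show ?thesis using assms by simp
next
  case False
  then have "x = - a / b" using assms(4) by (simp add: field_simps add_eq_0_iff)
  then have "x \<in> \<rat>" using assms(2,3) by simp
  then show ?thesis using assms(1) by simp
qed

lemma quad_int:
  fixes x T N :: complex
  assumes xQ: "x \<notin> \<rat>" and ai: "algebraic_int x" and TQ: "T \<in> \<rat>" and NQ: "N \<in> \<rat>"
     and eq: "x^2 = T * x - N"
  shows "T \<in> \<int> \<and> N \<in> \<int>"
proof -
  obtain p :: "int poly" where p: "poly (map_poly of_int p) x = 0" "lead_coeff p = 1"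
    using ai unfolding algebraic_int_altdef_ipoly by blast
  obtain t1 d1 where d1: "d1 > 0" "T = of_int t1 / of_int d1" using Rats_cases'[OF TQ] by metis
  obtain n1 d2 where d2: "d2 > 0" "N = of_int n1 / of_int d2" using Rats_cases'[OF NQ] by metis
  define g0 where "g0 = [:n1*d1, -(t1*d2), d1*d2:]"
  have g0x: "poly (map_poly of_int g0) x = 0"
  proof -
    have "poly (map_poly of_int g0) x = of_int (n1*d1) - of_int (t1*d2) * x + of_int (d1*d2) * x^2"
      unfolding g0_def by (simp add: map_poly_pCons algebra_simps power2_eq_square)
    also have "\<dots> = 0" using eq d1 d2 by (simp add: field_simps power2_eq_square)
    finally show ?thesis .
  qed
  have g0nz: "g0 \<noteq> 0" using d1 d2 unfolding g0_def by simp
  define g where "g = primitive_part g0"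
  have cg: "content g = 1" unfolding g_def using g0nz by simp
  have dg: "degree g = 2" unfolding g_def g0_def using d1 d2 by simp
  have gg0: "g0 = smult (content g0) g" unfolding g_def by simp
  have cg0: "content g0 \<noteq> 0" using g0nz by simp
  have gx: "poly (map_poly of_int g) x = 0"
  proof -
    have "0 = poly (map_poly of_int (smult (content g0) g)) x" using g0x gg0 by simp
    also have "\<dots> = of_int (content g0) * poly (map_poly of_int g) x" by (simp add: mp_smult)
    finally show ?thesis using cg0 by simp
  qed
  have gnz: "g \<noteq> 0" using dg by auto
  define lc where "lc = lead_coeff g"
  have lc0: "lc \<noteq> 0" unfolding lc_def using gnz by simp
  obtain q r where qr: "pseudo_divmod p g = (q, r)" by (cases "pseudo_divmod p g") auto
  define k where "k = Suc (degree p) - degree g"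
  have div: "smult (lc ^ k) p = g * q + r" unfolding lc_def k_def using pseudo_divmod(1)[OF gnz qr] by simp
  have rdeg: "r = 0 \<or> degree r < 2" using pseudo_divmod(2)[OF gnz qr] dg by simp
  have rx: "poly (map_poly of_int r) x = 0"
  proof -
    have "poly (map_poly of_int (smult (lc ^ k) p)) x = poly (map_poly of_int (g * q + r)) x" using div by simp
    then show ?thesis using p gx by (simp add: mp_smult mp_add mp_mult)
  qed
  have r0: "r = 0"
  proof -
    have "degree r \<le> 2" using rdeg by auto
    from deg2_poly[OF this, of x] rx
    have "of_int (coeff r 0) + of_int (coeff r 1) * x + of_int (coeff r 2) * x^2 = (0::complex)" by simp
    moreover have "coeff r 2 = 0" using rdeg by (auto intro: coeff_eq_0)
    ultimately have "of_int (coeff r 0) + of_int (coeff r 1) * x = (0::complex)" by simp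
    from lin_indep[OF xQ _ _ this] have c01: "coeff r 0 = 0" "coeff r 1 = 0" by auto
    have "coeff r n = 0" for n
    proof (cases "n < 2")
      case True then have "n = 0 \<or> n = 1" by auto
      then show ?thesis using c01 by auto
    next
      case False
      then show ?thesis using rdeg by (auto intro!: coeff_eq_0)
    qed
    then show ?thesis by (simp add: poly_eq_iff)
  qed
  have div2: "smult (lc ^ k) p = g * q" using div r0 by simp
  have pnz: "p \<noteq> 0" using p by auto
  have qnz: "q \<noteq> 0" using div2 pnz lc0 by auto
  have lead: "lc ^ k = lc * lead_coeff q"
    using arg_cong[OF div2, of lead_coeff] p(2) gnz unfolding lc_def by (simp add: lead_coeff_mult)
  have cp: "content p = 1"
  proof -
    have "content p dvd 1" using content_dvd_coeff[of p "degree p"] p(2) by simp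
    then have "\<bar>content p\<bar> = 1" by simp
    moreover have "\<bar>content p\<bar> = content p" using normalize_content[of p] by simp
    ultimately show ?thesis by simp
  qed
  have cq: "content q = \<bar>lc\<bar> ^ k"
  proof -
    have "content (smult (lc ^ k) p) = content (g * q)" using div2 by simp
    then show ?thesis using cp cg by (simp add: content_mult power_abs)
  qed
  have cqd: "content q dvd lead_coeff q" by (rule content_dvd_coeff)
  have lc1: "\<bar>lc\<bar> = 1"
  proof (cases k)
    case 0
    then have "lc dvd 1" using lead by (metis dvd_triv_left power_0)
    then show ?thesis by (simp add: zdvd1_eq)
  next
    case (Suc j)
    then have lq: "lead_coeff q = lc ^ j" using lead lc0 by simp
    have "\<bar>lc\<bar> ^ Suc j dvd lc ^ j" using cqd cq lq Suc by simp
    then have "\<bar>lc\<bar> ^ Suc j dvd \<bar>lc\<bar> ^ j" by (simp add: power_abs[symmetric])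
    moreover have "\<bar>lc\<bar> ^ j \<noteq> 0" using lc0 by simp
    ultimately have "\<bar>lc\<bar> ^ Suc j \<le> \<bar>lc\<bar> ^ j" using zdvd_imp_le by (metis abs_ge_zero dual_order.order_iff_strict zero_le_power)
    then have "\<bar>lc\<bar> * \<bar>lc\<bar> ^ j \<le> 1 * \<bar>lc\<bar> ^ j" by simp
    then have "\<bar>lc\<bar> \<le> 1" using lc0 by (metis mult_le_cancel_right_pos zero_less_abs_iff zero_less_power)
    then show ?thesis using lc0 by linarith
  qed
  have g2: "coeff g 2 = lc" unfolding lc_def using dg by simp
  from deg2_poly[of g x] gx dg g2
  have "of_int (coeff g 0) + of_int (coeff g 1) * x + of_int lc * x^2 = (0::complex)" by simp
  then have "(of_int (coeff g 0) - of_int lc * N) + (of_int (coeff g 1) + of_int lc * T) * x = (0::complex)"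
    using eq by (simp add: algebra_simps)
  from lin_indep[OF xQ _ _ this] TQ NQ
  have e1: "of_int (coeff g 0) = of_int lc * N" and e2: "of_int (coeff g 1) + of_int lc * T = 0" by auto
  have "lc = 1 \<or> lc = -1" using lc1 by linarith
  then show ?thesis
  proof
    assume "lc = 1"
    then have "N = of_int (coeff g 0)" "T = of_int (- coeff g 1)" using e1 e2 by (auto simp: add_eq_0_iff)
    then show ?thesis by auto
  next
    assume "lc = -1"
    then have "N = of_int (- coeff g 0)" "T = of_int (coeff g 1)" using e1 e2 by (auto simp: add_eq_0_iff)
    then show ?thesis by auto
  qed
qed



lemma int_sq_parity:
  fixes A B U V Z :: int
  assumes "Z^2 = (A^2 - 4*U) * (B^2 - 4*V)"
  shows "even (A*B + Z)"
proof (rule ccontr)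
  assume od: "odd (A*B + Z)"
  define M where "M = A*B"
  have od': "odd (M + Z)" using od M_def by simp
  have "odd (Z - M)" using od' by presburger
  then have "odd ((Z - M) * (M + Z))" using od' by simp
  moreover have "(Z - M) * (M + Z) = 4 * (4*U*V - U*B^2 - V*A^2)"
    using assms unfolding M_def by (simp add: algebra_simps power2_eq_square)
  ultimately show False by simp
qed

lemma rat_sq_int:
  fixes z :: complex
  assumes "z \<in> \<rat>" "z^2 \<in> \<int>"
  shows "z \<in> \<int>"
proof -
  have "algebraic_int z"
  proof
    show "poly [:-(z^2), 0, 1:] z = 0" by (simp add: power2_eq_square)
    show "lead_coeff [:-(z^2), 0, 1:] = 1" by simp
    show "\<forall>i. coeff [:-(z^2), 0, 1:] i \<in> \<int>" using assms(2)
      by (auto simp: coeff_pCons split: nat.splits)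
  qed
  then show ?thesis using rational_algebraic_int_is_int assms(1) by blast
qed

locale qf =
  fixes \<alpha> p q :: complex
  assumes irr: "\<alpha> \<notin> \<rat>" and pQ: "p \<in> \<rat>" and qQ: "q \<in> \<rat>" and sq: "\<alpha>^2 = p + q * \<alpha>"
begin

definition Kset :: "complex set" where
  "Kset = {a + b * \<alpha> | a b. a \<in> \<rat> \<and> b \<in> \<rat>}"

definition sg :: "complex \<Rightarrow> complex" where
  "sg x = (THE y. \<exists>a\<in>\<rat>. \<exists>b\<in>\<rat>. x = a + b * \<alpha> \<and> y = a + b * (q - \<alpha>))"

lemma coord_unique:
  assumes "a \<in> \<rat>" "b \<in> \<rat>" "c \<in> \<rat>" "d \<in> \<rat>" "a + b * \<alpha> = c + d * \<alpha>"
  shows "a = c \<and> b = d"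
proof -
  have "(a - c) + (b - d) * \<alpha> = 0" using assms(5) by (simp add: algebra_simps)
  from lin_indep[OF irr _ _ this] assms(1-4) show ?thesis by auto
qed

lemma sg_E: assumes "a \<in> \<rat>" "b \<in> \<rat>" shows "sg (a + b * \<alpha>) = a + b * (q - \<alpha>)"
  unfolding sg_def
proof (rule the_equality)
  show "\<exists>a'\<in>\<rat>. \<exists>b'\<in>\<rat>. a + b * \<alpha> = a' + b' * \<alpha> \<and> a + b * (q - \<alpha>) = a' + b' * (q - \<alpha>)"
    using assms by blast
next
  fix y assume "\<exists>a'\<in>\<rat>. \<exists>b'\<in>\<rat>. a + b * \<alpha> = a' + b' * \<alpha> \<and> y = a' + b' * (q - \<alpha>)"
  then obtain a' b' where "a' \<in> \<rat>" "b' \<in> \<rat>" "a + b * \<alpha> = a' + b' * \<alpha>" "y = a' + b' * (q - \<alpha>)" by blast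
  then show "y = a + b * (q - \<alpha>)" using coord_unique[of a b a' b'] assms by auto
qed

lemma KsetE: assumes "x \<in> Kset" obtains a b where "a \<in> \<rat>" "b \<in> \<rat>" "x = a + b * \<alpha>"
  using assms unfolding Kset_def by blast

lemma KsetI: "a \<in> \<rat> \<Longrightarrow> b \<in> \<rat> \<Longrightarrow> a + b * \<alpha> \<in> Kset"
  unfolding Kset_def by blast

lemma sq': "(q - \<alpha>)^2 = p + q * (q - \<alpha>)"
  using sq by (simp add: power2_eq_square algebra_simps)

lemma E_mult: "(a + b * \<beta>) * (c + d * \<beta>) = (a*c + b*d*p) + (a*d + b*c + b*d*q) * \<beta>"
  if "\<beta>^2 = p + q * \<beta>" for a b c d \<beta> :: complex
proof -
  have "(a + b * \<beta>) * (c + d * \<beta>) = a*c + (a*d + b*c) * \<beta> + b*d*\<beta>^2"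
    by (simp add: algebra_simps power2_eq_square)
  also have "\<dots> = (a*c + b*d*p) + (a*d + b*c + b*d*q) * \<beta>" using that by (simp add: algebra_simps)
  finally show ?thesis .
qed

lemma Kset_mult: "x \<in> Kset \<Longrightarrow> y \<in> Kset \<Longrightarrow> x * y \<in> Kset \<and> sg (x * y) = sg x * sg y"
proof -
  assume xK: "x \<in> Kset" and yK: "y \<in> Kset"
  obtain a b where ab: "a \<in> \<rat>" "b \<in> \<rat>" and x: "x = a + b * \<alpha>" using xK by (rule KsetE)
  obtain c d where cd: "c \<in> \<rat>" "d \<in> \<rat>" and y: "y = c + d * \<alpha>" using yK by (rule KsetE)
  have sx: "sg x = a + b * (q - \<alpha>)" unfolding x using sg_E[OF ab] .
  have sy: "sg y = c + d * (q - \<alpha>)" unfolding y using sg_E[OF cd] .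
  have Q: "a*c + b*d*p \<in> \<rat>" "a*d + b*c + b*d*q \<in> \<rat>" using ab cd pQ qQ by auto
  have xy: "x * y = (a*c + b*d*p) + (a*d + b*c + b*d*q) * \<alpha>" unfolding x y by (rule E_mult[OF sq])
  have sxy: "sg x * sg y = (a*c + b*d*p) + (a*d + b*c + b*d*q) * (q - \<alpha>)" unfolding sx sy by (rule E_mult[OF sq'])
  have "sg (x * y) = (a*c + b*d*p) + (a*d + b*c + b*d*q) * (q - \<alpha>)" unfolding xy using sg_E[OF Q] .
  then show ?thesis using xy sxy KsetI[OF Q] by simp
qed

lemma Kset_add: "x \<in> Kset \<Longrightarrow> y \<in> Kset \<Longrightarrow> x + y \<in> Kset \<and> sg (x + y) = sg x + sg y"
proof -
  assume xK: "x \<in> Kset" and yK: "y \<in> Kset"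
  obtain a b where ab: "a \<in> \<rat>" "b \<in> \<rat>" and x: "x = a + b * \<alpha>" using xK by (rule KsetE)
  obtain c d where cd: "c \<in> \<rat>" "d \<in> \<rat>" and y: "y = c + d * \<alpha>" using yK by (rule KsetE)
  have sx: "sg x = a + b * (q - \<alpha>)" unfolding x using sg_E[OF ab] .
  have sy: "sg y = c + d * (q - \<alpha>)" unfolding y using sg_E[OF cd] .
  have Q: "a + c \<in> \<rat>" "b + d \<in> \<rat>" using ab cd by auto
  have xy: "x + y = (a + c) + (b + d) * \<alpha>" unfolding x y by (simp add: algebra_simps)
  have sxy: "sg x + sg y = (a + c) + (b + d) * (q - \<alpha>)" unfolding sx sy by (simp add: algebra_simps)
  have "sg (x + y) = (a + c) + (b + d) * (q - \<alpha>)" unfolding xy using sg_E[OF Q] .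
  then show ?thesis using xy sxy KsetI[OF Q] by simp
qed

lemma Kset_rat: "r \<in> \<rat> \<Longrightarrow> r \<in> Kset \<and> sg r = r"
  using KsetI[of r 0] sg_E[of r 0] by simp

lemma tn_rat: assumes "x \<in> Kset" shows "x + sg x \<in> \<rat>" "x * sg x \<in> \<rat>"
proof -
  obtain a b where ab: "a \<in> \<rat>" "b \<in> \<rat>" and x: "x = a + b * \<alpha>" using assms by (rule KsetE)
  have s: "sg x = a + b * (q - \<alpha>)" unfolding x using sg_E[OF ab] .
  have "x + sg x = 2*a + b*q" unfolding s unfolding x by (simp add: algebra_simps)
  then show "x + sg x \<in> \<rat>" using ab qQ by simp
  have "x * sg x = a*a + a*b*q + b*b*(q*\<alpha> - \<alpha>^2)" unfolding s unfolding x by (simp add: algebra_simps power2_eq_square)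
  also have "\<dots> = a*a + a*b*q - b*b*p" using sq by simp
  finally show "x * sg x \<in> \<rat>" using ab pQ qQ by simp
qed

definition Ok :: "complex set" where "Ok = {x \<in> Kset. x + sg x \<in> \<int> \<and> x * sg x \<in> \<int>}"

lemma Ok_iff: assumes "x \<in> Kset" shows "algebraic_int x \<longleftrightarrow> x \<in> Ok"
proof
  assume ai: "algebraic_int x"
  show "x \<in> Ok"
  proof (cases "x \<in> \<rat>")
    case True
    then have "x \<in> \<int>" using rational_algebraic_int_is_int ai by blast
    moreover have "sg x = x" using Kset_rat True by simp
    ultimately show ?thesis using assms unfolding Ok_def by auto
  next
    case False
    have "x^2 = (x + sg x) * x - x * sg x" by (simp add: algebra_simps power2_eq_square)
    from quad_int[OF False ai tn_rat[OF assms] this] show ?thesis using assms unfolding Ok_def by auto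
  qed
next
  assume "x \<in> Ok"
  then have T: "x + sg x \<in> \<int>" and N: "x * sg x \<in> \<int>" unfolding Ok_def by auto
  show "algebraic_int x"
  proof
    show "poly [:x * sg x, -(x + sg x), 1:] x = 0" by (simp add: algebra_simps)
    show "lead_coeff [:x * sg x, -(x + sg x), 1:] = 1" by simp
    have e: "- x - sg x = -(x + sg x)" by simp
    have T2: "- x - sg x \<in> \<int>" unfolding e by (rule Ints_minus[OF T])
    show "\<forall>i. coeff [:x * sg x, -(x + sg x), 1:] i \<in> \<int>" using T2 N
      by (auto simp: coeff_pCons split: nat.splits)
  qed
qed

lemma Ok_mult_add:
  assumes x: "x \<in> Ok" and y: "y \<in> Ok"
  shows "x * y \<in> Ok \<and> x + y \<in> Ok"
proof -
  have xK: "x \<in> Kset" and yK: "y \<in> Kset" using x y unfolding Ok_def by auto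
  obtain A where A: "x + sg x = of_int A" using x unfolding Ok_def by (auto elim: Ints_cases)
  obtain U where U: "x * sg x = of_int U" using x unfolding Ok_def by (auto elim: Ints_cases)
  obtain B where B: "y + sg y = of_int B" using y unfolding Ok_def by (auto elim: Ints_cases)
  obtain V where V: "y * sg y = of_int V" using y unfolding Ok_def by (auto elim: Ints_cases)
  note m = Kset_mult[OF xK yK] and a = Kset_add[OF xK yK]
  define z where "z = (x - sg x) * (y - sg y)"
  have "z = 2*(x*y + sg x * sg y) - (x + sg x)*(y + sg y)" unfolding z_def by (simp add: algebra_simps)
  also have "\<dots> = 2 * (x*y + sg (x*y)) - of_int A * of_int B" by (simp only: conjunct2[OF m] A B)
  finally have zeq: "z = 2 * (x*y + sg (x*y)) - of_int A * of_int B" .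
  have tQ: "x*y + sg (x*y) \<in> \<rat>" by (rule tn_rat(1)[OF conjunct1[OF m]])
  have zQ: "z \<in> \<rat>" unfolding zeq using tQ by (intro Rats_diff Rats_mult) auto
  have z2: "z^2 = (of_int A^2 - 4 * of_int U) * (of_int B^2 - 4 * of_int V)"
  proof -
    have "(x - sg x)^2 = (x + sg x)^2 - 4 * (x * sg x)" by (simp add: algebra_simps power2_eq_square)
    moreover have "(y - sg y)^2 = (y + sg y)^2 - 4 * (y * sg y)" by (simp add: algebra_simps power2_eq_square)
    ultimately show ?thesis unfolding z_def using A B U V by (simp add: power_mult_distrib)
  qed
  have "z^2 \<in> \<int>" unfolding z2 by simp
  then have "z \<in> \<int>" using rat_sq_int zQ by blast
  then obtain Z where Z: "z = of_int Z" by (auto elim: Ints_cases)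
  have "of_int (Z^2) = (of_int ((A^2 - 4*U) * (B^2 - 4*V)) :: complex)" using z2 Z by simp
  then have "Z^2 = (A^2 - 4*U) * (B^2 - 4*V)" using of_int_eq_iff by blast
  then have ev: "even (A*B + Z)" by (rule int_sq_parity)
  then obtain W where W: "A*B + Z = 2*W" by blast
  have trxy: "x*y + sg (x*y) = of_int W"
  proof -
    have "2 * (x*y + sg (x*y)) = of_int A * of_int B + of_int Z" using zeq Z by simp
    also have "\<dots> = of_int (2*W)" using W by (metis of_int_add of_int_mult)
    finally have "2 * (x*y + sg (x*y)) = 2 * of_int W" by simp
    then show ?thesis by (metis mult_cancel_left zero_neq_numeral)
  qed
  have "x*y * sg (x*y) = (x * sg x) * (y * sg y)" by (simp add: conjunct2[OF m] algebra_simps)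
  then have nxy: "x*y * sg (x*y) = of_int (U*V)" by (simp only: U V of_int_mult)
  have "(x+y) + sg (x+y) = (x + sg x) + (y + sg y)" by (simp add: conjunct2[OF a] algebra_simps)
  then have txy: "(x+y) + sg (x+y) = of_int (A + B)" by (simp only: A B of_int_add)
  have "(x+y) * sg (x+y) = x * sg x + y * sg y + (x + sg x) * (y + sg y) - (x*y + sg (x*y))"
    by (simp add: conjunct2[OF a] conjunct2[OF m] algebra_simps)
  then have nx_y: "(x+y) * sg (x+y) = of_int (U + V + A*B - W)" by (simp only: U V A B trxy of_int_add of_int_mult of_int_diff)
  show ?thesis unfolding Ok_def using m a trxy nxy txy nx_y by auto
qed

lemma Ok_int: "of_int n \<in> Ok"
proof -
  have "of_int n \<in> Kset \<and> sg (of_int n) = of_int n" using Kset_rat[of "of_int n"] by simp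
  then show ?thesis unfolding Ok_def by simp
qed

lemma Ok_unit_norm:
  assumes x: "x \<in> Ok" and y: "y \<in> Ok" and xy: "x * y = 1"
  shows "x * sg x = 1 \<or> x * sg x = -1"
proof -
  have xK: "x \<in> Kset" and yK: "y \<in> Kset" using x y unfolding Ok_def by auto
  obtain U where U: "x * sg x = of_int U" using x unfolding Ok_def by (auto elim: Ints_cases)
  obtain V where V: "y * sg y = of_int V" using y unfolding Ok_def by (auto elim: Ints_cases)
  have "sg (x * y) = sg x * sg y" using Kset_mult[OF xK yK] by simp
  moreover have "sg 1 = 1" using Kset_rat[of 1] by simp
  ultimately have "sg x * sg y = 1" using xy by simp
  then have "(x * sg x) * (y * sg y) = 1" using xy by (simp add: algebra_simps)
  then have "of_int (U * V) = (1::complex)" using U V by simp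
  then have "U * V = 1" by (metis of_int_eq_1_iff)
  then have "U = 1 \<or> U = -1" using zmult_eq_1_iff by blast
  then show ?thesis using U by auto
qed

lemma fin_units: "finite {x. x \<in> Ok \<and> (\<exists>y\<in>Ok. x * y = 1) \<and> \<bar>ln (cmod x)\<bar> \<le> C}"
proof -
  define B where "B = \<lceil>2 * exp C\<rceil>"
  define R where "R = (\<Union>t\<in>{-B..B}. \<Union>n\<in>{-1,1::int}. {z::complex. poly [:of_int n, - of_int t, 1:] z = 0})"
  have "finite R" unfolding R_def
    by (intro finite_UN_I finite_atLeastAtMost_int finite.intros poly_roots_finite) auto
  moreover have "{x. x \<in> Ok \<and> (\<exists>y\<in>Ok. x * y = 1) \<and> \<bar>ln (cmod x)\<bar> \<le> C} \<subseteq> R"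
  proof
    fix x assume "x \<in> {x. x \<in> Ok \<and> (\<exists>y\<in>Ok. x * y = 1) \<and> \<bar>ln (cmod x)\<bar> \<le> C}"
    then obtain y where x: "x \<in> Ok" and y: "y \<in> Ok" and xy: "x * y = 1" and lx: "\<bar>ln (cmod x)\<bar> \<le> C" by blast
    have U1: "x * sg x = 1 \<or> x * sg x = -1" by (rule Ok_unit_norm[OF x y xy])
    then obtain U :: int where U: "x * sg x = of_int U" "U \<in> {-1, 1}" by (metis insertCI of_int_1 of_int_minus)
    have nn: "cmod x * cmod (sg x) = 1" using U1 by (metis norm_minus_cancel norm_mult norm_one)
    have x0: "cmod x > 0" using xy by auto
    have c1: "cmod x \<le> exp C" using lx x0 by (metis abs_le_D1 exp_le_cancel_iff exp_ln)
    have "- C \<le> ln (cmod x)" using lx by linarith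
    then have c2: "exp (- C) \<le> cmod x" using x0 by (metis exp_le_cancel_iff exp_ln)
    have "cmod (sg x) = 1 / cmod x" using nn x0 by (simp add: field_simps)
    also have "\<dots> \<le> 1 / exp (- C)" using c2 x0 by (intro divide_left_mono) auto
    also have "\<dots> = exp C" by (simp add: exp_minus field_simps)
    finally have c3: "cmod (sg x) \<le> exp C" .
    obtain A where A: "x + sg x = of_int A" using x unfolding Ok_def by (auto elim: Ints_cases)
    have "\<bar>real_of_int A\<bar> = cmod (x + sg x)" using A by (metis norm_of_int)
    also have "\<dots> \<le> cmod x + cmod (sg x)" by (rule norm_triangle_ineq)
    finally have "\<bar>real_of_int A\<bar> \<le> 2 * exp C" using c1 c3 by linarith
    then have AB: "A \<in> {-B..B}" unfolding B_def by (auto simp: abs_le_iff) linarith+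
    have "poly [:of_int U, - of_int A, 1:] x = x * sg x - (x + sg x) * x + x * x" using U A by (simp add: algebra_simps)
    also have "\<dots> = 0" by (simp add: algebra_simps)
    finally show "x \<in> R" unfolding R_def using AB U(2) by blast
  qed
  ultimately show ?thesis by (rule finite_subset[rotated])
qed

end


definition gmul :: "complex \<times> complex \<Rightarrow> complex \<times> complex \<Rightarrow> complex \<times> complex" where
  "gmul u v = (fst u * fst v + snd u * snd v, fst u * snd v + snd u * fst v)"

lemma R_mult: "mult (group_ring_C2 Oi) u v = gmul u v"
  by (cases u; cases v) (simp add: group_ring_C2_def gmul_def)

lemma R_one: "one (group_ring_C2 Oi) = (1, 0)" by (simp add: group_ring_C2_def)
lemma R_carrier: "carrier (group_ring_C2 Oi) = Oi \<times> Oi" by (simp add: group_ring_C2_def)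

lemma U1_carrier: "carrier (U1 Oi) = {u \<in> Units (group_ring_C2 Oi). augmentation u = 1}"
  by (simp add: U1_def)
lemma U1_mult: "mult (U1 Oi) u v = gmul u v" by (simp add: U1_def units_of_def R_mult)
lemma U1_one: "one (U1 Oi) = (1, 0)" by (simp add: U1_def units_of_def R_one)

lemma gmul_comm: "gmul u v = gmul v u" by (simp add: gmul_def algebra_simps)
lemma gmul_assoc: "gmul (gmul u v) w = gmul u (gmul v w)" by (simp add: gmul_def algebra_simps)
lemma gmul_one: "gmul (1,0) u = u" by (simp add: gmul_def)
lemma aug_gmul: "augmentation (gmul u v) = augmentation u * augmentation v"
  by (simp add: gmul_def augmentation_def algebra_simps)
lemma diff_gmul: "fst (gmul u v) - snd (gmul u v) = (fst u - snd u) * (fst v - snd v)"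
  by (simp add: gmul_def algebra_simps)

locale goodO =
  fixes Oi :: "complex set"
  assumes O0: "0 \<in> Oi" and O1: "1 \<in> Oi" and Om1: "-1 \<in> Oi"
    and Oadd: "\<And>x y. x \<in> Oi \<Longrightarrow> y \<in> Oi \<Longrightarrow> x + y \<in> Oi"
    and Omul: "\<And>x y. x \<in> Oi \<Longrightarrow> y \<in> Oi \<Longrightarrow> x * y \<in> Oi"
begin

lemma gmul_closed: "u \<in> Oi \<times> Oi \<Longrightarrow> v \<in> Oi \<times> Oi \<Longrightarrow> gmul u v \<in> Oi \<times> Oi"
  by (cases u; cases v) (auto simp: gmul_def intro!: Oadd Omul)

lemma carrier_iff: "u \<in> carrier (U1 Oi) \<longleftrightarrow> u \<in> Oi \<times> Oi \<and> augmentation u = 1 \<and> (\<exists>v\<in>Oi \<times> Oi. gmul u v = (1,0))"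
  unfolding U1_carrier Units_def R_mult R_one R_carrier using gmul_comm by auto

lemma inv_aug: assumes "augmentation u = 1" "gmul u v = (1,0)" shows "augmentation v = 1"
  using aug_gmul[of u v] assms by (simp add: augmentation_def)

lemma grp: "group (U1 Oi)"
proof (rule groupI)
  fix x y assume x: "x \<in> carrier (U1 Oi)" and y: "y \<in> carrier (U1 Oi)"
  obtain x' where x': "x' \<in> Oi \<times> Oi" "gmul x x' = (1,0)" using x carrier_iff by blast
  obtain y' where y': "y' \<in> Oi \<times> Oi" "gmul y y' = (1,0)" using y carrier_iff by blast
  have "gmul (gmul x y) (gmul y' x') = (1,0)"
    by (metis gmul_assoc gmul_comm gmul_one x'(2) y'(2))
  moreover have "gmul y' x' \<in> Oi \<times> Oi" using gmul_closed x' y' by blast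
  moreover have "gmul x y \<in> Oi \<times> Oi" using gmul_closed x y carrier_iff by blast
  moreover have "augmentation (gmul x y) = 1" using x y carrier_iff aug_gmul by simp
  ultimately show "x \<otimes>\<^bsub>U1 Oi\<^esub> y \<in> carrier (U1 Oi)" unfolding U1_mult carrier_iff
    by (intro conjI bexI[of _ "gmul y' x'"])
next
  show "\<one>\<^bsub>U1 Oi\<^esub> \<in> carrier (U1 Oi)" unfolding U1_one carrier_iff
    using O0 O1 by (intro conjI bexI[of _ "(1,0)"]) (auto simp: augmentation_def gmul_def)
next
  fix x y z show "x \<otimes>\<^bsub>U1 Oi\<^esub> y \<otimes>\<^bsub>U1 Oi\<^esub> z = x \<otimes>\<^bsub>U1 Oi\<^esub> (y \<otimes>\<^bsub>U1 Oi\<^esub> z)"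
    unfolding U1_mult by (rule gmul_assoc)
next
  fix x show "\<one>\<^bsub>U1 Oi\<^esub> \<otimes>\<^bsub>U1 Oi\<^esub> x = x" unfolding U1_mult U1_one by (rule gmul_one)
next
  fix x assume x: "x \<in> carrier (U1 Oi)"
  obtain x' where x': "x' \<in> Oi \<times> Oi" "gmul x x' = (1,0)" using x carrier_iff by blast
  have "augmentation x' = 1" using inv_aug x x'(2) carrier_iff by blast
  moreover have "gmul x' x = (1,0)" using x'(2) gmul_comm by simp
  moreover have "x \<in> Oi \<times> Oi" using x carrier_iff by blast
  ultimately have "x' \<in> carrier (U1 Oi)" unfolding carrier_iff using x' by blast
  then show "\<exists>y\<in>carrier (U1 Oi). y \<otimes>\<^bsub>U1 Oi\<^esub> x = \<one>\<^bsub>U1 Oi\<^esub>"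
    unfolding U1_mult U1_one using \<open>gmul x' x = (1,0)\<close> by blast
qed

definition Lf :: "complex \<times> complex \<Rightarrow> real" where "Lf u = ln (cmod (fst u - snd u))"

lemma diff_unit: assumes "u \<in> carrier (U1 Oi)"
  shows "fst u - snd u \<in> Oi \<and> (\<exists>y\<in>Oi. (fst u - snd u) * y = 1)"
proof -
  obtain v where v: "v \<in> Oi \<times> Oi" "gmul u v = (1,0)" using assms carrier_iff by blast
  have u: "u \<in> Oi \<times> Oi" using assms carrier_iff by blast
  have m: "x - y \<in> Oi" if "x \<in> Oi" "y \<in> Oi" for x y
  proof -
    have "x + (-1) * y \<in> Oi" using that Om1 by (intro Oadd Omul)
    then show ?thesis by simp
  qed
  have "(fst u - snd u) * (fst v - snd v) = 1" using diff_gmul[of u v] v(2) by simp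
  moreover have "fst v - snd v \<in> Oi" using v(1) m by (cases v) auto
  moreover have "fst u - snd u \<in> Oi" using u m by (cases u) auto
  ultimately show ?thesis by blast
qed

lemma Lf_hom: assumes "u \<in> carrier (U1 Oi)" "v \<in> carrier (U1 Oi)"
  shows "Lf (u \<otimes>\<^bsub>U1 Oi\<^esub> v) = Lf u + Lf v"
proof -
  have nu: "fst u - snd u \<noteq> 0" using diff_unit[OF assms(1)] by auto
  have nv: "fst v - snd v \<noteq> 0" using diff_unit[OF assms(2)] by auto
  show ?thesis unfolding U1_mult Lf_def diff_gmul using nu nv by (simp add: norm_mult ln_mult)
qed

lemma Lf_fin:
  assumes fin: "\<And>C. finite {x. x \<in> Oi \<and> (\<exists>y\<in>Oi. x * y = 1) \<and> \<bar>ln (cmod x)\<bar> \<le> C}"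
  shows "finite {g \<in> carrier (U1 Oi). \<bar>Lf g\<bar> \<le> C}"
proof -
  let ?F = "{x. x \<in> Oi \<and> (\<exists>y\<in>Oi. x * y = 1) \<and> \<bar>ln (cmod x)\<bar> \<le> C}"
  have "{g \<in> carrier (U1 Oi). \<bar>Lf g\<bar> \<le> C} \<subseteq> (\<lambda>z. ((1 + z) / 2, (1 - z) / 2)) ` ?F"
  proof
    fix g assume g: "g \<in> {g \<in> carrier (U1 Oi). \<bar>Lf g\<bar> \<le> C}"
    then have gc: "g \<in> carrier (U1 Oi)" and gl: "\<bar>Lf g\<bar> \<le> C" by auto
    have aug: "fst g + snd g = 1" using gc carrier_iff unfolding augmentation_def by blast
    have "fst g - snd g \<in> ?F" using diff_unit[OF gc] gl unfolding Lf_def by auto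
    moreover have "g = ((1 + (fst g - snd g)) / 2, (1 - (fst g - snd g)) / 2)"
      using aug by (cases g) (auto simp: field_simps)
    ultimately show "g \<in> (\<lambda>z. ((1 + z) / 2, (1 - z) / 2)) ` ?F" by blast
  qed
  then show ?thesis using finite_imageI[OF fin[of C]] finite_subset by blast
qed

lemma U1_hyperbolic:
  assumes fin: "\<And>C. finite {x. x \<in> Oi \<and> (\<exists>y\<in>Oi. x * y = 1) \<and> \<bar>ln (cmod x)\<bar> \<le> C}"
  shows "hyperbolic_group (U1 Oi)"
  by (rule group.hyperbolic_from_real_hom[OF grp, of Lf]) (use Lf_hom Lf_fin[OF fin] in auto)

end


theorem mainTheorem7:
  fixes K :: "complex set"
  assumes "quadratic_field K"
  shows "hyperbolic_group (U1 (ring_of_integers K))"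
proof -
  from assms obtain \<alpha> where sf: "subfield_of_complex K" and aK: "\<alpha> \<in> K" and irr: "\<alpha> \<notin> \<rat>"
    and Keq: "K = {of_rat a + of_rat b * \<alpha> | a b. True}"
    unfolding quadratic_field_def by blast
  have "\<alpha> * \<alpha> \<in> K" using sf aK unfolding subfield_of_complex_def by blast
  then obtain a b where ab: "\<alpha> * \<alpha> = of_rat a + of_rat b * \<alpha>" using Keq by blast
  interpret qf \<alpha> "of_rat a" "of_rat b"
    by unfold_locales (use irr ab in \<open>auto simp: power2_eq_square\<close>)
  have KK: "K = Kset"
    unfolding Keq Kset_def Rats_def by blast
  have roi: "ring_of_integers K = Ok"
    unfolding ring_of_integers_def KK using Ok_iff Ok_def by auto
  interpret goodO Ok
  proof
    show "0 \<in> Ok" using Ok_int[of 0] by simp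
    show "1 \<in> Ok" using Ok_int[of 1] by simp
    show "-1 \<in> Ok" using Ok_int[of "-1"] by simp
    show "\<And>x y. x \<in> Ok \<Longrightarrow> y \<in> Ok \<Longrightarrow> x + y \<in> Ok" using Ok_mult_add by blast
    show "\<And>x y. x \<in> Ok \<Longrightarrow> y \<in> Ok \<Longrightarrow> x * y \<in> Ok" using Ok_mult_add by blast
  qed
  show ?thesis unfolding roi by (rule U1_hyperbolic[OF fin_units])
qed


end
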